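(* Let $R$ be a finite chain ring and $S$ its Galois extension of rank $m$ with automorphism $\sigma$, as in the context. Let $a_1,\ldots,a_\ell\in S^*$ be such that $a_i-a_j^\beta\in S^*$ for all $\beta\in S^*$ and all $1\le i<j\le\ell$. Then for every non-zero monic skew polynomial $F\in S[x;\sigma]$, $$\sum_{i=1}^\ell {\rm frk}_R\big(F_{a_i}^{-1}(\mathfrak{M})\big)\le \deg(F),$$ where $F_{a_i}^{-1}(\mathfrak{M})=\{\beta\in S: F_{a_i}(\beta)\in\mathfrak{M}\}$.
   Context: $R$ is a finite commutative chain ring with maximal ideal $\mathfrak{m}$, $q=|R/\mathfrak{m}|$. $S=R[x]/(h)$ with $h\in R[x]$ monic of degree $m$ and irreducible modulo $\mathfrak{m}$; $S$ is local with maximal ideal $\mathfrak{M}=\mathfrak{m}S$, unit group $S^*=S\setminus\mathfrak{M}$, and $S/\mathfrak{M}=\mathbb{F}_{q^m}$. $\sigma$ is a ring automorphism of $S$ generating the Galois group of $R\subseteq S$ (fixed ring $R$), reducing modulo $\mathfrak{M}$ to $y\mapsto y^q$. $S[x;\sigma]$ is the skew polynomial ring with $xa=\sigma(a)x$ for $a\in S$. For $a\in S$, $N_i(a)=\sigma^{i-1}(a)\cdots\sigma(a)a$, $\mathcal{D}_a^i(\beta)=\sigma^i(\beta)N_i(a)$, and for $F=\sum_i F_ix^i$, $F_a(\beta)=\sum_iF_i\mathcal{D}_a^i(\beta)$ (an $R$-linear map $S\to S$). For $\beta\in S^*$, $a^\beta=\sigma(\beta)a\beta^{-1}$. For an $R$-module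 $M$ (or subset of $S$), ${\rm frk}_R(M)$ is the maximum size of an $R$-linearly independent subset of $M$. *)

theory Defs
  imports "HOL-Computational_Algebra.Polynomial"
begin

(* The ambient ring S is the whole (finite) type 's; R is a subring of it. *)

definition subring_of :: "'s::comm_ring_1 set \<Rightarrow> bool" where
  "subring_of R \<longleftrightarrow> 0 \<in> R \<and> 1 \<in> R \<and>
     (\<forall>x\<in>R. \<forall>y\<in>R. x + y \<in> R \<and> x - y \<in> R \<and> x * y \<in> R)"

definition ideal_in :: "'s::comm_ring_1 set \<Rightarrow> 's set \<Rightarrow> bool" where
  "ideal_in R I \<longleftrightarrow> I \<subseteq> R \<and> 0 \<in> I \<and>
     (\<forall>x\<in>I. \<forall>y\<in>I. x + y \<in> I) \<and> (\<forall>r\<in>R. \<forall>x\<in>I. r * x \<in> I)"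

definition finite_chain_ring :: "'s::comm_ring_1 set \<Rightarrow> bool" where
  "finite_chain_ring R \<longleftrightarrow> subring_of R \<and> finite R \<and> (1::'s) \<noteq> 0 \<and>
     (\<forall>I J. ideal_in R I \<longrightarrow> ideal_in R J \<longrightarrow> I \<subseteq> J \<or> J \<subseteq> I)"

definition max_ideal :: "'s::comm_ring_1 set \<Rightarrow> 's set" where
  "max_ideal R = {r \<in> R. \<not> (\<exists>u\<in>R. r * u = 1)}"

definition resfield_card :: "'s::comm_ring_1 set \<Rightarrow> nat" where
  "resfield_card R = card R div card (max_ideal R)"

definition ext_ideal :: "'s::comm_ring_1 set \<Rightarrow> 's set" where
  "ext_ideal R = {\<Sum>i<(n::nat). s i * r i | n s r. \<forall>i<n. r i \<in> max_ideal R}"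

definition poly_over :: "'s::comm_ring_1 set \<Rightarrow> 's poly \<Rightarrow> bool" where
  "poly_over R p \<longleftrightarrow> (\<forall>i. coeff p i \<in> R)"

(* h (monic, coefficients in R) is irreducible modulo \<m>: degree \<ge> 1 and h mod \<m>
   is not a product of two (w.l.o.g. monic) polynomials of positive degree *)
definition irred_mod_max :: "'s::comm_ring_1 set \<Rightarrow> 's poly \<Rightarrow> bool" where
  "irred_mod_max R h \<longleftrightarrow> degree h \<ge> 1 \<and>
     \<not> (\<exists>g k. poly_over R g \<and> poly_over R k \<and> lead_coeff g = 1 \<and> lead_coeff k = 1 \<and>
            degree g \<ge> 1 \<and> degree k \<ge> 1 \<and>
            (\<forall>i. coeff (h - g * k) i \<in> max_ideal R))"

(* S (= UNIV) is R[x]/(h): there is \<theta> with h(\<theta>) = 0 such that every element of S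
   is uniquely an R-combination of 1, \<theta>, ..., \<theta>^(m-1), m = deg h *)
definition is_quotient_by :: "'s::comm_ring_1 set \<Rightarrow> 's poly \<Rightarrow> bool" where
  "is_quotient_by R h \<longleftrightarrow> (\<exists>\<theta>. poly h \<theta> = 0 \<and>
     (\<forall>s. \<exists>!r. (\<forall>i. r i \<in> R) \<and> (\<forall>i\<ge>degree h. r i = 0) \<and>
              s = (\<Sum>i<degree h. r i * \<theta> ^ i)))"

definition ring_aut :: "('s::comm_ring_1 \<Rightarrow> 's) \<Rightarrow> bool" where
  "ring_aut f \<longleftrightarrow> bij f \<and> f 1 = 1 \<and> (\<forall>x y. f (x + y) = f x + f y \<and> f (x * y) = f x * f y)"

definition galois_generator :: "'s::comm_ring_1 set \<Rightarrow> ('s \<Rightarrow> 's) \<Rightarrow> bool" where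
  "galois_generator R \<sigma> \<longleftrightarrow> ring_aut \<sigma> \<and> (\<forall>r\<in>R. \<sigma> r = r) \<and>
     (\<forall>\<tau>. ring_aut \<tau> \<and> (\<forall>r\<in>R. \<tau> r = r) \<longrightarrow> (\<exists>k. \<tau> = (\<sigma> ^^ k))) \<and>
     {y. \<sigma> y = y} = R \<and>
     (\<forall>y. \<sigma> y - y ^ resfield_card R \<in> ext_ideal R)"

definition Nrm :: "('s::comm_ring_1 \<Rightarrow> 's) \<Rightarrow> nat \<Rightarrow> 's \<Rightarrow> 's" where
  "Nrm \<sigma> i a = (\<Prod>j<i. (\<sigma> ^^ j) a)"

definition Dop :: "('s::comm_ring_1 \<Rightarrow> 's) \<Rightarrow> 's \<Rightarrow> nat \<Rightarrow> 's \<Rightarrow> 's" where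
  "Dop \<sigma> a i \<beta> = (\<sigma> ^^ i) \<beta> * Nrm \<sigma> i a"

(* F_a(\<beta>) = \<Sum> F_i D_a^i(\<beta>); a skew polynomial F = \<Sum> F_i x^i in S[x;\<sigma>] is represented
   by its coefficient sequence, stored as an element of 's poly (only coefficients,
   degree and leading coefficient are used, never the commutative product) *)
definition skew_eval :: "('s::comm_ring_1 \<Rightarrow> 's) \<Rightarrow> 's poly \<Rightarrow> 's \<Rightarrow> 's \<Rightarrow> 's" where
  "skew_eval \<sigma> F a \<beta> = (\<Sum>i\<le>degree F. coeff F i * Dop \<sigma> a i \<beta>)"

definition R_indep :: "'s::comm_ring_1 set \<Rightarrow> 's set \<Rightarrow> bool" where
  "R_indep R A \<longleftrightarrow> finite A \<and>
     (\<forall>c. (\<forall>v\<in>A. c v \<in> R) \<longrightarrow> (\<Sum>v\<in>A. c v * v) = 0 \<longrightarrow> (\<forall>v\<in>A. c v = 0))"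

definition frk :: "'s::comm_ring_1 set \<Rightarrow> 's set \<Rightarrow> nat" where
  "frk R X = Max {card A | A. A \<subseteq> X \<and> R_indep R A}"

end

theory Submission
  imports Defs "HOL-Library.FuncSet"
begin



locale cring_setup =
  fixes R :: "'s::{comm_ring_1, finite} set"
  assumes chain: "finite_chain_ring R"
begin

lemma sub: "subring_of R" using chain by (simp add: finite_chain_ring_def)
lemma R0: "0 \<in> R" and R1: "1 \<in> R" using sub by (auto simp: subring_of_def)
lemma Radd: "x \<in> R \<Longrightarrow> y \<in> R \<Longrightarrow> x + y \<in> R" using sub by (auto simp: subring_of_def)
lemma Rdiff: "x \<in> R \<Longrightarrow> y \<in> R \<Longrightarrow> x - y \<in> R" using sub by (auto simp: subring_of_def)
lemma Rmult: "x \<in> R \<Longrightarrow> y \<in> R \<Longrightarrow> x * y \<in> R" using sub by (auto simp: subring_of_def)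
lemma Rneg: "x \<in> R \<Longrightarrow> - x \<in> R" using Rdiff[OF R0, of x] by simp
lemma Rpow: "x \<in> R \<Longrightarrow> x ^ n \<in> R" by (induction n) (auto simp: R1 Rmult)
lemma one_ne_zero: "(1::'s) \<noteq> 0" using chain by (simp add: finite_chain_ring_def)

abbreviation m where "m \<equiv> max_ideal R"

lemma m_sub: "m \<subseteq> R" by (auto simp: max_ideal_def)
lemma mem_m: "x \<in> m \<longleftrightarrow> x \<in> R \<and> \<not> (\<exists>u\<in>R. x * u = 1)" by (simp add: max_ideal_def)
lemma not_m_unit: "x \<in> R \<Longrightarrow> x \<notin> m \<Longrightarrow> \<exists>u\<in>R. x * u = 1" by (simp add: max_ideal_def)
lemma one_notin_m: "1 \<notin> m" using R1 by (auto simp: max_ideal_def)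
lemma zero_in_m: "0 \<in> m" using R0 one_ne_zero by (auto simp: max_ideal_def)
lemma m_mult: "x \<in> m \<Longrightarrow> r \<in> R \<Longrightarrow> x * r \<in> m"
  by (auto simp: max_ideal_def Rmult mult.assoc)
lemma m_neg: "x \<in> m \<Longrightarrow> - x \<in> m"
  using m_mult[of x "-1"] Rneg[OF R1] by simp

definition pid :: "'s \<Rightarrow> 's set" where "pid x = {x * r | r. r \<in> R}"

lemma pid_ideal: "x \<in> R \<Longrightarrow> ideal_in R (pid x)"
  unfolding ideal_in_def
proof (intro conjI ballI)
  assume x: "x \<in> R"
  show "pid x \<subseteq> R" unfolding pid_def using x Rmult by auto
  show "0 \<in> pid x" unfolding pid_def using R0 by (auto intro!: exI[of _ 0])
  fix u v assume "u \<in> pid x" "v \<in> pid x"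
  then obtain r s where "r \<in> R" "s \<in> R" "u = x * r" "v = x * s" unfolding pid_def by auto
  then show "u + v \<in> pid x" unfolding pid_def using Radd by (auto simp: distrib_left intro!: exI[of _ "r+s"])
next
  fix r u assume "r \<in> R" "u \<in> pid x"
  then obtain s where "s \<in> R" "u = x * s" unfolding pid_def by auto
  then show "r * u \<in> pid x" unfolding pid_def using Rmult \<open>r \<in> R\<close>
    by (auto simp: mult.left_commute intro!: exI[of _ "r*s"])
qed

lemma pid_chain: "x \<in> R \<Longrightarrow> y \<in> R \<Longrightarrow> pid x \<subseteq> pid y \<or> pid y \<subseteq> pid x"
  using chain pid_ideal unfolding finite_chain_ring_def by blast

lemma self_pid: "x \<in> R \<Longrightarrow> x \<in> pid x" unfolding pid_def using R1 by force

lemma m_add: assumes "x \<in> m" "y \<in> m" shows "x + y \<in> m"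
proof -
  have xR: "x \<in> R" "y \<in> R" using assms m_sub by auto
  { fix x y assume x: "x \<in> m" and y: "y \<in> m" and sub: "pid x \<subseteq> pid y"
    have xR: "x \<in> R" "y \<in> R" using x y m_sub by auto
    then obtain r where r: "r \<in> R" "x = y * r" using sub self_pid unfolding pid_def by blast
    have "x + y = y * (r + 1)" using r by (simp add: algebra_simps)
    moreover have "r + 1 \<in> R" using r R1 Radd by auto
    ultimately have "x + y \<in> m" using m_mult[OF y] by simp }
  then show ?thesis using pid_chain[OF xR] assms by (metis add.commute)
qed

lemma m_diff: "x \<in> m \<Longrightarrow> y \<in> m \<Longrightarrow> x - y \<in> m"
  using m_add[of x "-y"] m_neg by simp

lemma one_minus_unit: assumes "x \<in> m" shows "\<exists>u\<in>R. (1 - x) * u = 1"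
proof -
  have "1 - x \<notin> m" using m_add[OF _ assms, of "1-x"] one_notin_m by auto
  then show ?thesis using not_m_unit Rdiff R1 assms m_sub by blast
qed

lemma finR: "finite R" by simp

lemma principal: "\<exists>\<pi>\<in>m. \<forall>x\<in>m. \<exists>u\<in>R. x = \<pi> * u"
proof -
  have "finite (card ` pid ` m)" by simp
  moreover have "card ` pid ` m \<noteq> {}" using zero_in_m by auto
  ultimately obtain p where p: "p \<in> m" "card (pid p) = Max (card ` pid ` m)"
    by (metis (no_types, lifting) Max_in image_iff)
  have "\<forall>x\<in>m. x \<in> pid p"
  proof
    fix x assume x: "x \<in> m"
    have le: "card (pid x) \<le> card (pid p)" using p x by simp
    have xR: "x \<in> R" "p \<in> R" using x p m_sub by auto
    from pid_chain[OF xR] show "x \<in> pid p"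
    proof
      assume "pid x \<subseteq> pid p" then show ?thesis using self_pid xR by auto
    next
      assume s: "pid p \<subseteq> pid x"
      then have "pid p = pid x" using le by (meson card_mono card_subset_eq finite le_antisym)
      then show ?thesis using self_pid xR by auto
    qed
  qed
  then show ?thesis using p unfolding pid_def by blast
qed

definition \<pi> where "\<pi> = (SOME \<pi>. \<pi> \<in> m \<and> (\<forall>x\<in>m. \<exists>u\<in>R. x = \<pi> * u))"

lemma pi_both: "\<pi> \<in> m \<and> (\<forall>x\<in>m. \<exists>u\<in>R. x = \<pi> * u)"
  unfolding \<pi>_def by (rule someI_ex) (use principal in blast)
lemma pi_m: "\<pi> \<in> m" using pi_both by blast
lemma pi_gen: "x \<in> m \<Longrightarrow> \<exists>u\<in>R. x = \<pi> * u" using pi_both by blast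

lemma pi_R: "\<pi> \<in> R" using pi_m m_sub by auto

lemma pi_nilp: "\<exists>e. \<pi> ^ e = 0"
proof -
  define I where "I k = pid (\<pi> ^ k)" for k
  have dec: "I (Suc k) \<subseteq> I k" for k
    unfolding I_def pid_def by (auto, metis Rmult pi_R mult.assoc mult.commute power_Suc)
  have "\<exists>k. I (Suc k) = I k"
  proof (rule ccontr)
    assume "\<not> ?thesis"
    then have lt: "card (I (Suc k)) < card (I k)" for k
      using dec by (meson finite psubset_card_mono psubsetI)
    have "card (I k) + k \<le> card (I 0)" for k
      proof (induction k)
      case (Suc k)
      have "card (I (Suc k)) < card (I k)" by (rule lt)
      with Suc show ?case by simp
    qed simp
    from this[of "Suc (card (I 0))"] show False by simp
  qed
  then obtain k where k: "I (Suc k) = I k" by blast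
  have "\<pi> ^ k \<in> I k" unfolding I_def using self_pid Rpow pi_R by blast
  then obtain u where u: "u \<in> R" "\<pi> ^ k = \<pi> ^ Suc k * u" using k unfolding I_def pid_def by auto
  have "\<pi> * u \<in> m" using m_mult pi_m u by auto
  then obtain v where v: "v \<in> R" "(1 - \<pi> * u) * v = 1" using one_minus_unit by blast
  have "\<pi> ^ k * (1 - \<pi> * u) = 0" using u by (simp add: algebra_simps)
  then have "\<pi> ^ k * (1 - \<pi> * u) * v = 0" by simp
  then have "\<pi> ^ k = 0" using v by (simp add: mult.assoc)
  then show ?thesis by blast
qed

lemma socle: "\<exists>t\<in>R. t \<noteq> 0 \<and> t * \<pi> = 0"
proof -
  define e where "e = (LEAST e. \<pi> ^ e = 0)"
  have e0: "\<pi> ^ e = 0" unfolding e_def by (rule LeastI_ex) (rule pi_nilp)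
  have "e \<noteq> 0"
  proof
    assume "e = 0" with e0 one_ne_zero show False by simp
  qed
  then obtain e' where e': "e = Suc e'" by (cases e) auto
  have "\<pi> ^ e' \<noteq> 0" using e' not_less_Least[of e' "\<lambda>e. \<pi> ^ e = 0"] unfolding e_def by simp
  moreover have "\<pi> ^ e' * \<pi> = 0" using e0 e' by (simp add: mult.commute)
  ultimately show ?thesis using Rpow pi_R by blast
qed

lemma card_m_pos: "card m > 0"
proof -
  have "finite m" by simp
  then show ?thesis using zero_in_m by (auto simp: card_gt_0_iff)
qed

lemma q_ge2: "resfield_card R \<ge> 2"
proof -
  have d: "m \<inter> (\<lambda>x. 1 + x) ` m = {}"
    using m_diff one_notin_m by fastforce
  have "m \<union> (\<lambda>x. 1 + x) ` m \<subseteq> R" using m_sub R1 Radd by auto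
  then have "card (m \<union> (\<lambda>x. 1 + x) ` m) \<le> card R" by (simp add: card_mono)
  moreover have "card (m \<union> (\<lambda>x. 1 + x) ` m) = card m + card m"
    using d by (simp add: card_Un_disjoint card_image)
  ultimately have "2 * card m \<le> card R" by simp
  then have "2 * card m div card m \<le> card R div card m" by (rule div_le_mono)
  then show ?thesis unfolding resfield_card_def using card_m_pos by simp
qed

lemma reps: "\<exists>B\<subseteq>R. resfield_card R \<le> card B \<and> (\<forall>x\<in>B. \<forall>y\<in>B. x - y \<in> m \<longrightarrow> x = y)"
proof -
  define P where "P B \<longleftrightarrow> B \<subseteq> R \<and> (\<forall>x\<in>B. \<forall>y\<in>B. x - y \<in> m \<longrightarrow> x = y)" for B
  have "finite (card ` Collect P)" by simp
  moreover have "P {}" unfolding P_def by auto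
  ultimately have "Max (card ` Collect P) \<in> card ` Collect P" by (intro Max_in) auto
  then obtain B where B: "P B" "card B = Max (card ` Collect P)" by auto
  have cov: "\<exists>r\<in>B. x - r \<in> m" if x: "x \<in> R" for x
  proof (rule ccontr)
    assume n: "\<not> ?thesis"
    have "x \<in> B \<Longrightarrow> \<exists>r\<in>B. x - r \<in> m" using zero_in_m by (intro bexI[of _ x]) auto
    then have xB: "x \<notin> B" using n by blast
    have "P (insert x B)" unfolding P_def
    proof (intro conjI ballI impI)
      show "insert x B \<subseteq> R" using B(1) x unfolding P_def by auto
      fix y z assume y: "y \<in> insert x B" and z: "z \<in> insert x B" and d: "y - z \<in> m"
      show "y = z"
      proof (cases "y = x")
        case True
        then show ?thesis using z d n by auto
      next
        case False
        then have yB: "y \<in> B" using y by auto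
        show ?thesis
        proof (cases "z = x")
          case True
          then have "x - y \<in> m" using m_neg[OF d] by (simp add: minus_diff_eq)
          then show ?thesis using yB n by auto
        next
          case False
          then show ?thesis using yB z d B(1) unfolding P_def by auto
        qed
      qed
    qed
    then have "card (insert x B) \<le> Max (card ` Collect P)" by (intro Max_ge) auto
    then have "card (insert x B) \<le> card B" using B(2) by simp
    then show False using xB by simp
  qed
  have "R \<subseteq> (\<Union>r\<in>B. (\<lambda>y. r + y) ` m)"
  proof
    fix x assume "x \<in> R" then obtain r where "r \<in> B" "x - r \<in> m" using cov by blast
    then show "x \<in> (\<Union>r\<in>B. (\<lambda>y. r + y) ` m)" by (auto intro!: bexI[of _ r] image_eqI[of _ _ "x - r"])
  qed
  then have "card R \<le> card (\<Union>r\<in>B. (\<lambda>y. r + y) ` m)" by (simp add: card_mono)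
  also have "\<dots> \<le> (\<Sum>r\<in>B. card ((\<lambda>y. r + y) ` m))" by (rule card_UN_le) simp
  also have "\<dots> = card B * card m" by (simp add: card_image)
  finally have "card R \<le> card B * card m" .
  then have "resfield_card R \<le> card B" unfolding resfield_card_def
    using div_le_mono[of "card R" "card B * card m" "card m"] card_m_pos by simp
  then show ?thesis using B(1) unfolding P_def by blast
qed

end



lemma aut_add: "ring_aut f \<Longrightarrow> f (x + y) = f x + f y" by (simp add: ring_aut_def)
lemma aut_mult: "ring_aut f \<Longrightarrow> f (x * y) = f x * f y" by (simp add: ring_aut_def)
lemma aut_one: "ring_aut f \<Longrightarrow> f 1 = 1" by (simp add: ring_aut_def)
lemma aut_zero: "ring_aut f \<Longrightarrow> f (0::'a::comm_ring_1) = 0"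
proof -
  assume a: "ring_aut f"
  have "f 0 = f (0 + 0)" by simp
  also have "\<dots> = f 0 + f 0" using aut_add[OF a] by blast
  finally show ?thesis by simp
qed
lemma aut_neg: "ring_aut f \<Longrightarrow> f (- (x::'a::comm_ring_1)) = - f x"
proof -
  assume a: "ring_aut f"
  have "f (- x) + f x = f (-x + x)" using aut_add[OF a, of "-x" x] by simp
  also have "\<dots> = 0" using aut_zero[OF a] by simp
  finally show ?thesis by (simp add: eq_neg_iff_add_eq_0)
qed
lemma aut_diff: "ring_aut f \<Longrightarrow> f ((x::'a::comm_ring_1) - y) = f x - f y"
  using aut_add[of f x "-y"] aut_neg[of f y] by simp
lemma aut_sum: "ring_aut f \<Longrightarrow> f (\<Sum>i\<in>A. g i :: 'a::comm_ring_1) = (\<Sum>i\<in>A. f (g i))"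
  by (induction A rule: infinite_finite_induct) (auto simp: aut_zero aut_add)
lemma aut_prod: "ring_aut f \<Longrightarrow> f (\<Prod>i\<in>A. g i :: 'a::comm_ring_1) = (\<Prod>i\<in>A. f (g i))"
  by (induction A rule: infinite_finite_induct) (auto simp: aut_one aut_mult)
lemma aut_pow: "ring_aut f \<Longrightarrow> f ((x::'a::comm_ring_1) ^ n) = f x ^ n"
  by (induction n) (auto simp: aut_one aut_mult)
lemma aut_funpow: "ring_aut f \<Longrightarrow> ring_aut (f ^^ k)"
proof (induction k)
  case 0 then show ?case by (simp add: ring_aut_def bij_id[unfolded id_def])
next
  case (Suc k)
  then have "bij (f ^^ k)" "bij f" by (auto simp: ring_aut_def)
  then have "bij (f ^^ Suc k)" by (simp add: bij_comp)
  with Suc show ?case by (simp add: ring_aut_def comp_def)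
qed
lemma aut_unit: assumes a: "ring_aut f" and b: "x * y = 1" shows "f x * f y = 1"
proof -
  have "f x * f y = f (x * y)" using aut_mult[OF a] by simp
  then show ?thesis using b aut_one[OF a] by simp
qed

locale gal_setup = cring_setup R for R :: "'s::{comm_ring_1, finite} set" +
  fixes \<sigma> :: "'s \<Rightarrow> 's"
  assumes galois: "galois_generator R \<sigma>"
begin

abbreviation M where "M \<equiv> ext_ideal R"

lemma saut: "ring_aut \<sigma>" using galois by (simp add: galois_generator_def)
lemma sR: "r \<in> R \<Longrightarrow> \<sigma> r = r" using galois by (simp add: galois_generator_def)
lemma sq: "\<sigma> y - y ^ resfield_card R \<in> M" using galois by (simp add: galois_generator_def)
lemma skaut: "ring_aut (\<sigma> ^^ k)" by (rule aut_funpow[OF saut])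
lemma skR: "r \<in> R \<Longrightarrow> (\<sigma> ^^ k) r = r" by (induction k) (auto simp: sR)

lemma M_eq: "M = range (\<lambda>s. \<pi> * s)"
proof
  show "M \<subseteq> range (\<lambda>s. \<pi> * s)"
  proof
    fix x assume "x \<in> M"
    then have "\<exists>n s r. x = (\<Sum>i<(n::nat). s i * r i) \<and> (\<forall>i<n. r i \<in> m)"
      unfolding ext_ideal_def by (simp only: mem_Collect_eq)
    then obtain n s r where x: "x = (\<Sum>i<(n::nat). s i * r i)" "\<forall>i<n. r i \<in> m"
      by (elim exE conjE)
    have "\<forall>i. \<exists>u. i < n \<longrightarrow> r i = \<pi> * u" using x(2) pi_gen by blast
    from choice[OF this] obtain u where u0: "\<forall>i. i < n \<longrightarrow> r i = \<pi> * u i" by blast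
    have u: "\<And>i. i < n \<Longrightarrow> r i = \<pi> * u i" using u0 by blast
    have "x = (\<Sum>i<n. s i * (\<pi> * u i))" unfolding x(1) by (rule sum.cong) (auto simp: u)
    also have "\<dots> = (\<Sum>i<n. \<pi> * (s i * u i))" by (simp add: mult.left_commute)
    also have "\<dots> = \<pi> * (\<Sum>i<n. s i * u i)" by (simp add: sum_distrib_left)
    finally show "x \<in> range (\<lambda>s. \<pi> * s)" by blast
  qed
next
  show "range (\<lambda>s. \<pi> * s) \<subseteq> M"
  proof
    fix x assume "x \<in> range (\<lambda>s. \<pi> * s)"
    then obtain s where xs: "x = \<pi> * s" by blast
    have "x = (\<Sum>i<(1::nat). (\<lambda>_. s) i * (\<lambda>_. \<pi>) i) \<and> (\<forall>i<(1::nat). (\<lambda>_. \<pi>) i \<in> m)"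
      using pi_m xs by (simp add: mult.commute)
    then have "\<exists>n s r. x = (\<Sum>i<(n::nat). s i * r i) \<and> (\<forall>i<n. r i \<in> m)" by (intro exI)
    then show "x \<in> M" unfolding ext_ideal_def by (simp only: mem_Collect_eq)
  qed
qed

lemma M_iff: "x \<in> M \<longleftrightarrow> (\<exists>s. x = \<pi> * s)" unfolding M_eq by (simp add: image_iff eq_commute)

lemma M0: "0 \<in> M" unfolding M_iff by (auto intro: exI[of _ 0])
lemma Madd: assumes "x \<in> M" "y \<in> M" shows "x + y \<in> M"
proof -
  obtain s where s: "x = \<pi> * s" using assms M_iff by blast
  obtain t where t: "y = \<pi> * t" using assms M_iff by blast
  have "x + y = \<pi> * (s + t)" unfolding s t by (simp add: distrib_left)
  then show ?thesis unfolding M_iff by blast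
qed
lemma Mmult: assumes "x \<in> M" shows "y * x \<in> M"
proof -
  obtain s where s: "x = \<pi> * s" using assms M_iff by blast
  have "y * x = \<pi> * (y * s)" unfolding s by (simp add: mult.left_commute)
  then show ?thesis unfolding M_iff by blast
qed
lemma Mmult2: "x \<in> M \<Longrightarrow> x * y \<in> M"
  using Mmult[of x y] by (simp add: mult.commute)
lemma Mneg: "x \<in> M \<Longrightarrow> - x \<in> M" using Mmult[of x "-1"] by simp
lemma Mdiff: "x \<in> M \<Longrightarrow> y \<in> M \<Longrightarrow> x - y \<in> M" using Madd[of x "-y"] Mneg by simp
lemma Mneg_iff: "- x \<in> M \<longleftrightarrow> x \<in> M"
proof
  assume "- x \<in> M" then have "- (- x) \<in> M" by (rule Mneg) then show "x \<in> M" by simp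
qed (rule Mneg)
lemma Mdiff_sym: "x - y \<in> M \<Longrightarrow> y - x \<in> M" using Mneg[of "x - y"] by simp
lemma Msum: "(\<And>i. i \<in> A \<Longrightarrow> f i \<in> M) \<Longrightarrow> (\<Sum>i\<in>A. f i) \<in> M"
  by (induction A rule: infinite_finite_induct) (auto simp: M0 Madd)
lemma m_M: "x \<in> m \<Longrightarrow> x \<in> M" using pi_gen M_iff by blast

lemma M_nilp: "x \<in> M \<Longrightarrow> \<exists>k. x ^ k = 0"
proof -
  assume "x \<in> M" then obtain s where s: "x = \<pi> * s" using M_iff by blast
  obtain e where "\<pi> ^ e = 0" using pi_nilp by blast
  then have "x ^ e = 0" using s by (simp add: power_mult_distrib)
  then show ?thesis by blast
qed

lemma one_plus_M_unit: assumes "n \<in> M" shows "(1 + n) dvd 1"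
proof -
  obtain k where k: "n ^ k = 0" using M_nilp[OF assms] by blast
  have "(- n) ^ k = (- 1) ^ k * n ^ k" by (rule power_minus)
  then have z: "(- n) ^ k = 0" using k by simp
  have e: "1 - (- n) ^ k = (1 - (- n)) * (\<Sum>i<k. (- n) ^ i)" by (rule one_diff_power_eq)
  have "1 = (1 + n) * (\<Sum>i<k. (- n) ^ i)" using e unfolding z by simp
  then show ?thesis by (rule dvdI)
qed

lemma one_notin_M: "1 \<notin> M"
proof
  assume "1 \<in> M"
  then obtain k where "(1::'s) ^ k = 0" using M_nilp by blast
  then show False using one_ne_zero by simp
qed

lemma unit_notin_M: assumes "u dvd 1" shows "u \<notin> M"
proof
  assume u: "u \<in> M"
  obtain k where "1 = u * k" using assms by (rule dvdE)
  then show False using Mmult2[OF u, of k] one_notin_M by simp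
qed

lemma unit_mod_M: assumes "x * y - 1 \<in> M" shows "x dvd 1"
proof -
  have "(1 + (x * y - 1)) dvd 1" by (rule one_plus_M_unit[OF assms])
  then have "(x * y) dvd 1" by simp
  then show ?thesis using dvd_mult_left by blast
qed

lemma socle_M: "\<exists>t\<in>R. t \<noteq> 0 \<and> (\<forall>x\<in>M. t * x = 0)"
proof -
  obtain t where t: "t \<in> R" "t \<noteq> 0" "t * \<pi> = 0" using socle by blast
  have "\<forall>x\<in>M. t * x = 0" using t(3) M_iff by (auto simp: mult.assoc[symmetric])
  then show ?thesis using t by blast
qed

lemma indep_mod: assumes A: "R_indep R A" and c: "\<forall>v\<in>A. c v \<in> R"
  and s: "(\<Sum>v\<in>A. c v * v) \<in> M" shows "\<forall>v\<in>A. c v \<in> m"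
proof
  fix v assume v: "v \<in> A"
  obtain t where t: "t \<in> R" "t \<noteq> 0" "\<forall>x\<in>M. t * x = 0" using socle_M by blast
  have "(\<Sum>w\<in>A. (t * c w) * w) = t * (\<Sum>w\<in>A. c w * w)"
    by (simp add: sum_distrib_left mult.assoc)
  also have "\<dots> = 0" using t s by blast
  finally have z: "(\<Sum>w\<in>A. (\<lambda>w. t * c w) w * w) = 0" by simp
  have "\<forall>c. (\<forall>v\<in>A. c v \<in> R) \<longrightarrow> (\<Sum>v\<in>A. c v * v) = 0 \<longrightarrow> (\<forall>v\<in>A. c v = 0)"
    using A unfolding R_indep_def by (elim conjE)
  from spec[OF this, of "\<lambda>w. t * c w"]
  have "(\<forall>w\<in>A. (\<lambda>w. t * c w) w \<in> R) \<longrightarrow> (\<Sum>w\<in>A. (\<lambda>w. t * c w) w * w) = 0 \<longrightarrow> (\<forall>w\<in>A. (\<lambda>w. t * c w) w = 0)" .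
  moreover have "\<forall>w\<in>A. (\<lambda>w. t * c w) w \<in> R" using c t(1) Rmult by auto
  ultimately have "\<forall>w\<in>A. t * c w = 0" using z by simp
  then have tc: "t * c v = 0" using v by blast
  show "c v \<in> m"
  proof (rule ccontr)
    assume "c v \<notin> m"
    then obtain u where "u \<in> R" "c v * u = 1" using not_m_unit c v by blast
    then have "t = t * c v * u" by (simp add: mult.assoc)
    then show False using tc t(2) by simp
  qed
qed

lemma sM: "x \<in> M \<Longrightarrow> (\<sigma> ^^ k) x \<in> M"
proof -
  assume "x \<in> M" then obtain s where "x = \<pi> * s" using M_iff by blast
  then have "(\<sigma> ^^ k) x = \<pi> * (\<sigma> ^^ k) s" using aut_mult[OF skaut] skR[OF pi_R] by simp
  then show ?thesis using M_iff by blast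
qed
lemma sM1: "x \<in> M \<Longrightarrow> \<sigma> x \<in> M" using sM[of x 1] by simp

lemma unit_M_cancel: assumes "u * v = 1" "u * x \<in> M" shows "x \<in> M"
proof -
  have "v * (u * x) \<in> M" using Mmult[OF assms(2)] .
  moreover have "v * (u * x) = x" using assms(1) by (simp add: mult.assoc[symmetric] mult.commute)
  ultimately show ?thesis by simp
qed

end



context cring_setup begin

lemma Rsum: "(\<And>i. i \<in> A \<Longrightarrow> f i \<in> R) \<Longrightarrow> (\<Sum>i\<in>A. f i) \<in> R"
  by (induction A rule: infinite_finite_induct) (auto simp: R0 Radd)

lemma po_coeff: "poly_over R p \<Longrightarrow> coeff p i \<in> R" by (simp add: poly_over_def)
lemma po_add: "poly_over R p \<Longrightarrow> poly_over R q \<Longrightarrow> poly_over R (p + q)"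
  by (simp add: poly_over_def Radd)
lemma po_diff: "poly_over R p \<Longrightarrow> poly_over R q \<Longrightarrow> poly_over R (p - q)"
  by (simp add: poly_over_def Rdiff)
lemma po_mult: assumes "poly_over R p" "poly_over R q" shows "poly_over R (p * q)"
  unfolding poly_over_def coeff_mult
  by (intro allI Rsum Rmult) (use assms in \<open>auto simp: poly_over_def\<close>)
lemma po_monom: "c \<in> R \<Longrightarrow> poly_over R (monom c n)"
  by (simp add: poly_over_def R0)
lemma po_zero: "poly_over R 0" by (simp add: poly_over_def R0)

lemma monic_div:
  assumes g: "poly_over R g" "lead_coeff g = 1"
  shows "poly_over R f \<Longrightarrow> \<exists>q r. poly_over R q \<and> poly_over R r \<and> f = g * q + r \<and>
            (r = 0 \<or> degree r < degree g)"
proof (induction "degree f" arbitrary: f rule: less_induct)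
  case less
  show ?case
  proof (cases "f = 0 \<or> degree f < degree g")
    case True
    then show ?thesis using less.prems po_zero
      by (intro exI[of _ 0] exI[of _ f]) auto
  next
    case False
    then have f0: "f \<noteq> 0" and le: "degree g \<le> degree f" by auto
    define k where "k = degree f - degree g"
    define c where "c = lead_coeff f"
    define f' where "f' = f - monom c k * g"
    have cR: "c \<in> R" unfolding c_def using less.prems po_coeff by blast
    have pf': "poly_over R f'" unfolding f'_def
      by (intro po_diff less.prems po_mult po_monom cR g)
    have dmg: "degree (monom c k * g) \<le> degree f"
      using degree_mult_le[of "monom c k" g] degree_monom_le[of c k] le unfolding k_def by linarith
    have "coeff (monom c k * g) (degree f) = c * coeff g (degree f - k)"
      by (simp add: coeff_monom_mult k_def)
    also have "degree f - k = degree g" using le unfolding k_def by simp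
    finally have "coeff (monom c k * g) (degree f) = c" using g by simp
    then have cf': "coeff f' (degree f) = 0" unfolding f'_def c_def by simp
    have df': "degree f' \<le> degree f" unfolding f'_def using dmg by (intro degree_diff_le) auto
    show ?thesis
    proof (cases "f' = 0")
      case True
      then have "f = g * monom c k + 0" unfolding f'_def by (simp add: mult.commute)
      then show ?thesis using po_monom[OF cR] po_zero by blast
    next
      case False
      have "degree f' \<noteq> degree f"
      proof
        assume "degree f' = degree f"
        then have "coeff f' (degree f') = 0" using cf' by simp
        then show False using False by simp
      qed
      then have "degree f' < degree f" using df' by simp
      from less.hyps[OF this pf'] obtain q r where qr: "poly_over R q" "poly_over R r"
        "f' = g * q + r" "r = 0 \<or> degree r < degree g" by blast
      have "f = g * (q + monom c k) + r" using qr(3) unfolding f'_def by (simp add: algebra_simps)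
      moreover have "poly_over R (q + monom c k)" by (intro po_add qr po_monom cR)
      ultimately show ?thesis using qr by blast
    qed
  qed
qed

end

locale full_setup = gal_setup R \<sigma> for R :: "'s::{comm_ring_1, finite} set" and \<sigma> +
  fixes h :: "'s poly"
  assumes hR: "poly_over R h" and hmon: "lead_coeff h = 1" and hirr: "irred_mod_max R h"
    and hquot: "is_quotient_by R h"
begin

lemma local_unit: assumes xM: "x \<notin> M" shows "x dvd 1"
proof (rule ccontr)
  assume nu: "\<not> x dvd 1"
  obtain \<theta> where th0: "poly h \<theta> = 0" and threp: "\<And>s. \<exists>!r. (\<forall>i. r i \<in> R) \<and> (\<forall>i\<ge>degree h. r i = 0) \<and>
              s = (\<Sum>i<degree h. r i * \<theta> ^ i)"
    using hquot unfolding is_quotient_by_def by blast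
  define d where "d = degree h"
  define J where "J = {x * s + \<mu> | s \<mu>. \<mu> \<in> M}"
  have J_iff: "y \<in> J \<longleftrightarrow> (\<exists>s \<mu>. \<mu> \<in> M \<and> y = x * s + \<mu>)" for y
    unfolding J_def by blast
  have JM: "y \<in> M \<Longrightarrow> y \<in> J" for y unfolding J_iff by (intro exI[of _ 0] exI[of _ y]) simp
  have Jx: "x \<in> J" unfolding J_iff using M0 by (intro exI[of _ 1] exI[of _ 0]) simp
  have Jadd: "y \<in> J \<Longrightarrow> z \<in> J \<Longrightarrow> y + z \<in> J" for y z
  proof -
    assume "y \<in> J" "z \<in> J"
    then obtain s1 m1 s2 m2 where "m1 \<in> M" "y = x * s1 + m1" "m2 \<in> M" "z = x * s2 + m2"
      unfolding J_iff by blast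
    then show "y + z \<in> J" unfolding J_iff using Madd
      by (intro exI[of _ "s1 + s2"] exI[of _ "m1 + m2"]) (simp add: algebra_simps)
  qed
  have Jmult: "y \<in> J \<Longrightarrow> z * y \<in> J" for y z
  proof -
    assume "y \<in> J"
    then obtain s1 m1 where "m1 \<in> M" "y = x * s1 + m1" unfolding J_iff by blast
    then show "z * y \<in> J" unfolding J_iff using Mmult
      by (intro exI[of _ "z * s1"] exI[of _ "z * m1"]) (simp add: algebra_simps)
  qed
  have Jneg: "y \<in> J \<Longrightarrow> - y \<in> J" for y using Jmult[of y "-1"] by simp
  have Jdiff: "y \<in> J \<Longrightarrow> z \<in> J \<Longrightarrow> y - z \<in> J" for y z using Jadd[of y "-z"] Jneg by simp
  have J1: "1 \<notin> J"
  proof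
    assume "1 \<in> J"
    then obtain s \<mu> where s: "\<mu> \<in> M" "1 = x * s + \<mu>" unfolding J_iff by blast
    then have "x * s - 1 = - \<mu>" by (simp add: algebra_simps)
    then have "x * s - 1 \<in> M" using Mneg[OF s(1)] by simp
    then show False using unit_mod_M nu by blast
  qed
  define P where "P = {p. poly_over R p \<and> lead_coeff p = 1 \<and> poly p \<theta> \<in> J}"
  have normalize: "\<exists>p'\<in>P. degree p' \<le> degree p"
    if pR: "poly_over R p" and pJ: "poly p \<theta> \<in> J" and ex: "\<exists>i. coeff p i \<notin> m" for p
  proof -
    define K where "K = {i. coeff p i \<notin> m}"
    have Kfin: "K \<subseteq> {..degree p}" unfolding K_def using zero_in_m
      by (auto intro: le_degree)
    then have finK: "finite K" by (rule finite_subset) simp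
    have Kne: "K \<noteq> {}" using ex unfolding K_def by auto
    define k where "k = Max K"
    have kK: "k \<in> K" unfolding k_def using finK Kne by (rule Max_in)
    have kmax: "i > k \<Longrightarrow> coeff p i \<in> m" for i
      using Max_ge[OF finK, of i] unfolding k_def K_def by auto
    have kdeg: "k \<le> degree p" using kK Kfin by auto
    obtain u where u: "u \<in> R" "coeff p k * u = 1"
      using not_m_unit kK po_coeff[OF pR] unfolding K_def by blast
    define tr where "tr = (\<Sum>i\<le>degree p. monom (if i \<le> k then coeff p i else 0) i)"
    define p' where "p' = smult u tr"
    have ctr: "coeff tr j = (if j \<le> k then coeff p j else 0)" for j
    proof -
      have "coeff tr j = (\<Sum>i\<le>degree p. if i = j then (if i \<le> k then coeff p i else 0) else 0)"
        unfolding tr_def coeff_sum by simp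
      also have "\<dots> = (if j \<le> degree p then (if j \<le> k then coeff p j else 0) else 0)"
        by (simp add: sum.delta)
      also have "\<dots> = (if j \<le> k then coeff p j else 0)" using kdeg by auto
      finally show ?thesis .
    qed
    have cp': "coeff p' j = (if j \<le> k then u * coeff p j else 0)" for j
      unfolding p'_def by (simp add: ctr)
    have dp': "degree p' = k"
    proof (rule antisym)
      show "degree p' \<le> k" by (rule degree_le) (simp add: cp')
      show "k \<le> degree p'" by (rule le_degree) (use u in \<open>simp add: cp' mult.commute\<close>)
    qed
    have lp': "lead_coeff p' = 1" using dp' u by (simp add: cp' mult.commute)
    have p'R: "poly_over R p'" unfolding poly_over_def cp' using po_coeff[OF pR] u Rmult R0 by auto
    have "poly p \<theta> - poly tr \<theta> = (\<Sum>i\<le>degree p. coeff p i * \<theta> ^ i - (if i \<le> k then coeff p i else 0) * \<theta> ^ i)"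
      unfolding poly_altdef[of p] tr_def poly_sum poly_monom by (simp add: sum_subtractf)
    also have "\<dots> \<in> M"
    proof (rule Msum)
      fix i assume "i \<in> {..degree p}"
      show "coeff p i * \<theta> ^ i - (if i \<le> k then coeff p i else 0) * \<theta> ^ i \<in> M"
      proof (cases "i \<le> k")
        case True then show ?thesis using M0 by simp
      next
        case False then have "coeff p i \<in> m" using kmax by simp
        then show ?thesis using False m_M Mmult2 by simp
      qed
    qed
    finally have "poly p \<theta> - poly tr \<theta> \<in> M" .
    from Jdiff[OF pJ JM[OF this]] have "poly tr \<theta> \<in> J" by simp
    then have "poly p' \<theta> \<in> J" unfolding p'_def using Jmult by simp
    then have "p' \<in> P" unfolding P_def using lp' p'R by blast
    then show ?thesis using dp' kdeg by blast
  qed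
  obtain r where r: "\<forall>i. r i \<in> R" "\<forall>i\<ge>degree h. r i = 0" "x = (\<Sum>i<degree h. r i * \<theta> ^ i)"
    using threp[of x] by blast
  have d1: "d \<ge> 1" using hirr unfolding irred_mod_max_def d_def by simp
  define px where "px = (\<Sum>i<d. monom (r i) i)"
  have cpx: "coeff px j = (if j < d then r j else 0)" for j
    unfolding px_def coeff_sum by (simp add: sum.delta)
  have pxR: "poly_over R px" unfolding poly_over_def cpx using r R0 by auto
  have pxx: "poly px \<theta> = x" unfolding px_def poly_sum poly_monom r(3) d_def ..
  have dpx: "degree px < d"
  proof -
    have "degree px \<le> d - 1" by (rule degree_le) (auto simp: cpx)
    then show ?thesis using d1 by simp
  qed
  have "\<exists>i. coeff px i \<notin> m"
  proof (rule ccontr)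
    assume "\<not> ?thesis"
    then have "\<forall>i<d. r i \<in> m" using cpx by (metis (full_types))
    then have "x \<in> M" unfolding r(3) d_def[symmetric] by (intro Msum) (auto intro: Mmult2 m_M)
    then show False using xM by simp
  qed
  then obtain p0 where p0: "p0 \<in> P" "degree p0 < d"
    using normalize[OF pxR _] pxx Jx dpx by fastforce
  define n where "n = (LEAST n. \<exists>p\<in>P. degree p = n)"
  have "\<exists>p\<in>P. degree p = n" unfolding n_def by (rule LeastI_ex) (use p0 in blast)
  then obtain g where gP: "g \<in> P" and gn: "degree g = n" by blast
  have gmin: "p \<in> P \<Longrightarrow> degree g \<le> degree p" for p
    unfolding gn n_def by (rule Least_le) blast
  have gR: "poly_over R g" and gl: "lead_coeff g = 1" and gJ: "poly g \<theta> \<in> J"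
    using gP unfolding P_def by auto
  have gd: "degree g < d" using gmin[OF p0(1)] p0(2) by simp
  have g1: "degree g \<ge> 1"
  proof (rule ccontr)
    assume "\<not> ?thesis"
    then have "degree g = 0" by simp
    then have "poly g \<theta> = 1" using gl by (simp add: poly_altdef)
    then show False using gJ J1 by simp
  qed
  obtain k rr where kr: "poly_over R k" "poly_over R rr" "h = g * k + rr" "rr = 0 \<or> degree rr < degree g"
    using monic_div[OF gR gl hR] by blast
  have rrJ: "poly rr \<theta> \<in> J"
  proof -
    have "poly rr \<theta> = - (poly k \<theta> * poly g \<theta>)" using arg_cong[OF kr(3), of "\<lambda>p. poly p \<theta>"] th0
      by (simp add: algebra_simps eq_neg_iff_add_eq_0)
    then show ?thesis using Jneg Jmult gJ by simp
  qed
  have rrm: "\<forall>i. coeff rr i \<in> m"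
  proof (rule ccontr)
    assume "\<not> ?thesis"
    then have ex: "\<exists>i. coeff rr i \<notin> m" by blast
    then have "rr \<noteq> 0" using zero_in_m by auto
    then have "degree rr < degree g" using kr(4) by simp
    moreover obtain p' where "p' \<in> P" "degree p' \<le> degree rr" using normalize[OF kr(2) rrJ ex] by blast
    ultimately show False using gmin by fastforce
  qed
  have drr: "degree rr < d" using kr(4) gd by auto
  have gk: "g * k = h - rr" using kr(3) by simp
  have dhr: "degree (h - rr) = d"
  proof -
    have "coeff (h - rr) d = 1" using hmon drr by (simp add: d_def coeff_eq_0)
    then have "d \<le> degree (h - rr)" by (intro le_degree) simp
    moreover have "degree (h - rr) \<le> d" using drr by (intro degree_diff_le) (auto simp: d_def)
    ultimately show ?thesis by simp
  qed
  have chr: "lead_coeff (h - rr) = 1" using dhr hmon drr by (simp add: d_def coeff_eq_0)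
  have k0: "k \<noteq> 0"
  proof
    assume "k = 0" then have "h - rr = 0" using gk by simp
    then show False using chr by simp
  qed
  have cs: "coeff (g * k) (degree g + degree k) = lead_coeff k"
    using coeff_mult_degree_sum[of g k] gl by simp
  have "lead_coeff k \<noteq> 0" using k0 by simp
  then have "degree g + degree k \<le> degree (g * k)" using cs by (intro le_degree) simp
  then have dgk: "degree (g * k) = degree g + degree k" using degree_mult_le[of g k] by simp
  have kd: "degree g + degree k = d" using dgk gk dhr by simp
  have kl: "lead_coeff k = 1" using cs dgk gk chr by simp
  have "\<forall>i. coeff (h - g * k) i \<in> m" using gk rrm by simp
  moreover have "degree k \<ge> 1" using kd gd by simp
  ultimately have "\<exists>g k. poly_over R g \<and> poly_over R k \<and> lead_coeff g = 1 \<and> lead_coeff k = 1 \<and>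
            degree g \<ge> 1 \<and> degree k \<ge> 1 \<and> (\<forall>i. coeff (h - g * k) i \<in> max_ideal R)"
    using gR kr(1) gl kl g1 by blast
  then show False using hirr unfolding irred_mod_max_def by blast
qed

lemma M_prime: "x * y \<in> M \<Longrightarrow> x \<notin> M \<Longrightarrow> y \<in> M"
proof -
  assume a: "x * y \<in> M" "x \<notin> M"
  then obtain v where "1 = x * v" using local_unit by (meson dvdE)
  then show "y \<in> M" using unit_M_cancel[of x v y] a by simp
qed

end



lemma fiber_card:
  fixes g :: "'a \<Rightarrow> 'b::ab_group_add"
  assumes D: "finite D" and W: "finite W"
    and sb: "\<And>x y. x \<in> D \<Longrightarrow> y \<in> D \<Longrightarrow> sb x y \<in> D \<and> g (sb x y) = g x - g y"
    and inj: "\<And>y. y \<in> D \<Longrightarrow> inj_on (\<lambda>x. sb x y) D"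
  shows "card {x\<in>D. g x \<in> W} \<le> card W * card {x\<in>D. g x = 0}"
proof -
  let ?K = "{x\<in>D. g x = 0}"
  have eq: "{x\<in>D. g x \<in> W} = (\<Union>w\<in>W. {x\<in>D. g x = w})" by auto
  have fib: "card {x\<in>D. g x = w} \<le> card ?K" for w
  proof (cases "{x\<in>D. g x = w} = {}")
    case True
    have "card {x\<in>D. g x = w} = 0" unfolding True by (rule card.empty)
    then show ?thesis by simp
  next
    case False
    then obtain x0 where x0: "x0 \<in> D" "g x0 = w" by blast
    have "inj_on (\<lambda>x. sb x x0) {x\<in>D. g x = w}" using inj[OF x0(1)] by (rule inj_on_subset) auto
    moreover have "(\<lambda>x. sb x x0) ` {x\<in>D. g x = w} \<subseteq> ?K" using sb x0 by auto
    ultimately show ?thesis by (rule card_inj_on_le) (simp add: D)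
  qed
  have "card {x\<in>D. g x \<in> W} \<le> (\<Sum>w\<in>W. card {x\<in>D. g x = w})" unfolding eq
    by (rule card_UN_le[OF W])
  also have "\<dots> \<le> (\<Sum>w\<in>W. card ?K)" by (rule sum_mono) (rule fib)
  also have "\<dots> = card W * card ?K" by simp
  finally show ?thesis .
qed

context gal_setup begin

lemma card_M_pos: "card M > 0"
proof -
  have "finite M" by simp
  then show ?thesis using M0 by (auto simp: card_gt_0_iff)
qed

lemma preimage_card:
  fixes L :: "'s \<Rightarrow> 's"
  assumes Ladd: "\<And>x y. L (x + y) = L x + L y"
    and WM: "\<And>w \<mu>. w \<in> W \<Longrightarrow> \<mu> \<in> M \<Longrightarrow> w + \<mu> \<in> W"
  shows "card {\<gamma>. L \<gamma> \<in> W} * card M \<le> card W * card {\<gamma>. L \<gamma> \<in> M}"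
proof -
  have Ldiff: "L (x - y) = L x - L y" for x y
  proof -
    have "L x = L ((x - y) + y)" by simp
    also have "\<dots> = L (x - y) + L y" by (rule Ladd)
    finally show ?thesis by (simp add: algebra_simps)
  qed
  define D where "D = (UNIV :: 's set) \<times> M"
  define G where "G = (\<lambda>(x::'s, y::'s). L x + y)"
  define sb where "sb = (\<lambda>(x::'s, y::'s) (u, v). (x - u, y - v))"
  have "card {z\<in>D. G z \<in> W} \<le> card W * card {z\<in>D. G z = 0}"
  proof (rule fiber_card)
    show "finite D" by simp
    show "finite W" by simp
    fix z w assume "z \<in> D" "w \<in> D"
    then show "sb z w \<in> D \<and> G (sb z w) = G z - G w"
      unfolding D_def G_def sb_def using Mdiff by (auto simp: Ldiff split: prod.splits)
  next
    fix w assume "w \<in> D"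
    show "inj_on (\<lambda>z. sb z w) D" unfolding sb_def by (rule inj_onI) (auto split: prod.splits)
  qed
  moreover have "{z\<in>D. G z \<in> W} = {\<gamma>. L \<gamma> \<in> W} \<times> M"
  proof (rule set_eqI)
    fix z :: "'s \<times> 's"
    obtain x y where z: "z = (x, y)" by (cases z)
    have "z \<in> {z\<in>D. G z \<in> W} \<longleftrightarrow> y \<in> M \<and> L x + y \<in> W" unfolding z D_def G_def by simp
    also have "\<dots> \<longleftrightarrow> y \<in> M \<and> L x \<in> W"
    proof
      assume a: "y \<in> M \<and> L x + y \<in> W"
      then have "L x + y + (- y) \<in> W" using WM Mneg by blast
      then show "y \<in> M \<and> L x \<in> W" using a by simp
    next
      assume "y \<in> M \<and> L x \<in> W" then show "y \<in> M \<and> L x + y \<in> W" using WM by blast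
    qed
    finally show "z \<in> {z\<in>D. G z \<in> W} \<longleftrightarrow> z \<in> {\<gamma>. L \<gamma> \<in> W} \<times> M" unfolding z by auto
  qed
  moreover have "{z\<in>D. G z = 0} = (\<lambda>x. (x, - L x)) ` {\<gamma>. L \<gamma> \<in> M}"
  proof (rule set_eqI)
    fix z :: "'s \<times> 's"
    obtain x y where z: "z = (x, y)" by (cases z)
    show "z \<in> {z\<in>D. G z = 0} \<longleftrightarrow> z \<in> (\<lambda>x. (x, - L x)) ` {\<gamma>. L \<gamma> \<in> M}"
    proof
      assume "z \<in> {z\<in>D. G z = 0}"
      then have y: "y \<in> M" "L x + y = 0" unfolding z D_def G_def by auto
      then have y2: "y = - L x" by (simp add: eq_neg_iff_add_eq_0 add.commute)
      then have "L x \<in> M" using y(1) Mneg_iff by simp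
      then show "z \<in> (\<lambda>x. (x, - L x)) ` {\<gamma>. L \<gamma> \<in> M}" unfolding z y2 by auto
    next
      assume "z \<in> (\<lambda>x. (x, - L x)) ` {\<gamma>. L \<gamma> \<in> M}"
      then obtain x' where "z = (x', - L x')" "L x' \<in> M" by auto
      then show "z \<in> {z\<in>D. G z = 0}" unfolding D_def G_def using Mneg by auto
    qed
  qed
  moreover have "card ((\<lambda>x. (x, - L x)) ` {\<gamma>. L \<gamma> \<in> M}) = card {\<gamma>. L \<gamma> \<in> M}"
    by (rule card_image) (rule inj_onI, simp)
  ultimately show ?thesis by (simp add: card_cartesian_product)
qed

lemma lower_bound:
  assumes MV: "M \<subseteq> V" and Vadd: "\<And>x y. x \<in> V \<Longrightarrow> y \<in> V \<Longrightarrow> x + y \<in> V"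
    and Vsm: "\<And>r x. r \<in> R \<Longrightarrow> x \<in> V \<Longrightarrow> r * x \<in> V"
    and AV: "A \<subseteq> V" and A: "R_indep R A"
  shows "card M * resfield_card R ^ card A \<le> card V"
proof -
  obtain B where B: "B \<subseteq> R" "resfield_card R \<le> card B" "\<forall>x\<in>B. \<forall>y\<in>B. x - y \<in> m \<longrightarrow> x = y"
    using reps by blast
  have finA: "finite A" using A unfolding R_indep_def by blast
  define \<Phi> where "\<Phi> = (\<lambda>(c, \<mu>). (\<Sum>v\<in>A. c v * v) + \<mu>)"
  define Dom where "Dom = (PiE A (\<lambda>_. B)) \<times> M"
  have Vsum: "(\<Sum>v\<in>A'. f v * v) \<in> V" if "A' \<subseteq> A" "\<forall>v\<in>A'. f v \<in> R" for A' f
  proof -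
    have "finite A'" using that(1) finA by (rule finite_subset)
    then show ?thesis using that
    proof (induction A' rule: finite_induct)
      case empty then show ?case using MV M0 by auto
    next
      case (insert v F)
      then show ?case using Vadd Vsm AV by auto
    qed
  qed
  have img: "\<Phi> ` Dom \<subseteq> V"
  proof
    fix z assume "z \<in> \<Phi> ` Dom"
    then obtain c \<mu> where c: "c \<in> PiE A (\<lambda>_. B)" "\<mu> \<in> M" "z = (\<Sum>v\<in>A. c v * v) + \<mu>"
      unfolding Dom_def \<Phi>_def by auto
    have "(\<Sum>v\<in>A. c v * v) \<in> V" using c(1) B(1) by (intro Vsum) (auto simp: PiE_iff)
    then show "z \<in> V" using c MV Vadd by auto
  qed
  have inj: "inj_on \<Phi> Dom"
  proof (rule inj_onI)
    fix z1 z2 assume z1: "z1 \<in> Dom" and z2: "z2 \<in> Dom" and e: "\<Phi> z1 = \<Phi> z2"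
    obtain c1 \<mu>1 where 1: "z1 = (c1, \<mu>1)" "c1 \<in> PiE A (\<lambda>_. B)" "\<mu>1 \<in> M" using z1 unfolding Dom_def by auto
    obtain c2 \<mu>2 where 2: "z2 = (c2, \<mu>2)" "c2 \<in> PiE A (\<lambda>_. B)" "\<mu>2 \<in> M" using z2 unfolding Dom_def by auto
    have e2: "(\<Sum>v\<in>A. c1 v * v) + \<mu>1 = (\<Sum>v\<in>A. c2 v * v) + \<mu>2" using e unfolding 1 2 \<Phi>_def by simp
    have "(\<Sum>v\<in>A. (c1 v - c2 v) * v) = (\<Sum>v\<in>A. c1 v * v) - (\<Sum>v\<in>A. c2 v * v)"
      by (simp add: sum_subtractf algebra_simps)
    also have "\<dots> = \<mu>2 - \<mu>1" using e2 by (simp add: algebra_simps)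
    finally have "(\<Sum>v\<in>A. (\<lambda>v. c1 v - c2 v) v * v) \<in> M" using Mdiff[OF 2(3) 1(3)] by simp
    moreover have "\<forall>v\<in>A. (\<lambda>v. c1 v - c2 v) v \<in> R"
    proof
      fix v assume "v \<in> A"
      then have "c1 v \<in> R" "c2 v \<in> R" using 1(2) 2(2) B(1) by (auto simp: PiE_iff)
      then show "(\<lambda>v. c1 v - c2 v) v \<in> R" using Rdiff by simp
    qed
    ultimately have "\<forall>v\<in>A. (\<lambda>v. c1 v - c2 v) v \<in> m" using indep_mod[OF A, of "\<lambda>v. c1 v - c2 v"] by blast
    then have "\<forall>v\<in>A. c1 v = c2 v" using B(3) 1(2) 2(2) by (auto simp: PiE_iff)
    then have "c1 = c2" using 1(2) 2(2) by (intro PiE_ext) auto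
    then show "z1 = z2" using e2 unfolding 1 2 by simp
  qed
  have "card Dom = card B ^ card A * card M"
    unfolding Dom_def by (simp add: card_cartesian_product card_PiE finA)
  moreover have "card Dom \<le> card V" using card_inj_on_le[OF inj img] by simp
  moreover have "resfield_card R ^ card A \<le> card B ^ card A" using B(2) by (rule power_mono) simp
  ultimately show ?thesis by (metis dual_order.trans mult.commute mult_le_mono1)
qed

lemma frk_attained: "\<exists>A\<subseteq>V. R_indep R A \<and> card A = frk R V"
proof -
  let ?S = "{card A | A. A \<subseteq> V \<and> R_indep R A}"
  have "?S \<subseteq> {..card (UNIV :: 's set)}" by (auto intro: card_mono)
  then have "finite ?S" by (rule finite_subset) simp
  moreover have "R_indep R {}" unfolding R_indep_def by simp
  then have "?S \<noteq> {}" by blast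
  ultimately have "Max ?S \<in> ?S" by (rule Max_in)
  then have "\<exists>A. Max ?S = card A \<and> A \<subseteq> V \<and> R_indep R A" by (simp only: mem_Collect_eq)
  then obtain A where A: "Max ?S = card A" "A \<subseteq> V" "R_indep R A" by (elim exE conjE)
  have "A \<subseteq> V \<and> R_indep R A \<and> card A = frk R V" unfolding frk_def using A by simp
  then show ?thesis by (intro exI[of _ A]) simp
qed

end

context full_setup begin

lemma root_count: "lead_coeff p = 1 \<Longrightarrow> card {y. poly p y \<in> M} \<le> degree p * card M"
proof (induction "degree p" arbitrary: p)
  case 0
  then have "poly p y = 1" for y by (simp add: poly_altdef)
  then have "{y. poly p y \<in> M} = {}" using one_notin_M by auto
  then show ?case by simp
next
  case (Suc n)
  show ?case
  proof (cases "{y. poly p y \<in> M} = {}")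
    case True then show ?thesis by simp
  next
    case False
    then obtain y0 where y0: "poly p y0 \<in> M" by blast
    define p1 where "p1 = synthetic_div p y0"
    have pe: "p = [:-y0, 1:] * p1 + [:poly p y0:]" unfolding p1_def by (rule synthetic_div_correct'[symmetric])
    have dp1: "degree p1 = n" unfolding p1_def degree_synthetic_div using Suc.hyps(2) by simp
    have "coeff p (Suc n) = coeff ([:-y0, 1:] * p1) (Suc n)"
      by (subst pe) simp
    also have "\<dots> = coeff p1 n - y0 * coeff p1 (Suc n)" by (simp add: algebra_simps)
    also have "coeff p1 (Suc n) = 0" using dp1 by (simp add: coeff_eq_0)
    finally have l1: "lead_coeff p1 = 1" using Suc.prems Suc.hyps(2) dp1 by simp
    have IH: "card {y. poly p1 y \<in> M} \<le> n * card M" using Suc.hyps(1)[of p1] dp1 l1 by simp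
    have sub: "{y. poly p y \<in> M} \<subseteq> (\<lambda>z. y0 + z) ` M \<union> {y. poly p1 y \<in> M}"
    proof
      fix y assume y: "y \<in> {y. poly p y \<in> M}"
      have "poly p y = (y - y0) * poly p1 y + poly p y0"
        by (subst pe) (simp add: algebra_simps)
      then have "(y - y0) * poly p1 y \<in> M" using Mdiff[of "poly p y" "poly p y0"] y y0 by simp
      then have "y - y0 \<in> M \<or> poly p1 y \<in> M" using M_prime by blast
      then show "y \<in> (\<lambda>z. y0 + z) ` M \<union> {y. poly p1 y \<in> M}"
        by (auto intro: image_eqI[of _ _ "y - y0"])
    qed
    have "card {y. poly p y \<in> M} \<le> card ((\<lambda>z. y0 + z) ` M \<union> {y. poly p1 y \<in> M})"
      using sub by (simp add: card_mono)
    also have "\<dots> \<le> card ((\<lambda>z. y0 + z) ` M) + card {y. poly p1 y \<in> M}" by (rule card_Un_le)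
    also have "\<dots> \<le> card M + n * card M" using IH by (simp add: card_image)
    finally have "card {y. poly p y \<in> M} \<le> Suc n * card M" by simp
    then show ?thesis unfolding Suc.hyps(2) .
  qed
qed

lemma fix_count: "card {\<delta>. \<delta> ^ resfield_card R - \<delta> \<in> M} \<le> resfield_card R * card M"
proof -
  define q where "q = resfield_card R"
  have q2: "q \<ge> 2" unfolding q_def by (rule q_ge2)
  define p :: "'s poly" where "p = monom 1 q - [:0, 1:]"
  have cp: "coeff p j = (if j = q then 1 else 0) - (if j = 1 then 1 else 0)" for j
    unfolding p_def by (auto simp: coeff_pCons split: nat.splits)
  have dp: "degree p = q"
  proof (rule antisym)
    show "degree p \<le> q" by (rule degree_le) (use q2 in \<open>auto simp: cp\<close>)
    show "q \<le> degree p" by (rule le_degree) (use q2 one_ne_zero in \<open>auto simp: cp\<close>)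
  qed
  have lp: "lead_coeff p = 1" using dp q2 by (simp add: cp)
  have "poly p y = y ^ q - y" for y unfolding p_def by (simp add: poly_monom)
  then show ?thesis using root_count[OF lp] dp unfolding q_def by simp
qed

end



context gal_setup begin

definition E :: "(nat \<Rightarrow> 's) \<Rightarrow> nat \<Rightarrow> 's \<Rightarrow> 's \<Rightarrow> 's" where
  "E c d a \<gamma> = (\<Sum>k\<le>d. c k * Dop \<sigma> a k \<gamma>)"

lemma Dop_add: "Dop \<sigma> a i (x + y) = Dop \<sigma> a i x + Dop \<sigma> a i y"
  unfolding Dop_def using aut_add[OF skaut] by (simp add: algebra_simps)
lemma Dop_mult: "Dop \<sigma> a i (c * x) = (\<sigma> ^^ i) c * Dop \<sigma> a i x"
  unfolding Dop_def using aut_mult[OF skaut] by (simp add: algebra_simps)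
lemma Dop_R: "r \<in> R \<Longrightarrow> Dop \<sigma> a i (r * x) = r * Dop \<sigma> a i x"
  using Dop_mult skR by simp
lemma Dop_M: "x \<in> M \<Longrightarrow> Dop \<sigma> a i x \<in> M"
  unfolding Dop_def using sM Mmult2 by blast
lemma Dop_0: "Dop \<sigma> a 0 \<gamma> = \<gamma>" by (simp add: Dop_def Nrm_def)
lemma Dop_zero: "Dop \<sigma> a i 0 = 0" unfolding Dop_def using aut_zero[OF skaut] by simp
lemma Dop_diff: "Dop \<sigma> a i (x - y) = Dop \<sigma> a i x - Dop \<sigma> a i y"
  unfolding Dop_def by (simp add: aut_diff[OF skaut] left_diff_distrib)
lemma Dop_Suc: "Dop \<sigma> a (Suc i) \<gamma> = Dop \<sigma> a i (\<sigma> \<gamma> * a)"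
proof -
  have "Dop \<sigma> a (Suc i) \<gamma> = (\<sigma> ^^ Suc i) \<gamma> * ((\<sigma> ^^ i) a * Nrm \<sigma> i a)"
    unfolding Dop_def Nrm_def by (simp add: mult.commute)
  also have "(\<sigma> ^^ Suc i) \<gamma> = (\<sigma> ^^ i) (\<sigma> \<gamma>)" by (simp add: funpow_swap1)
  finally show ?thesis unfolding Dop_def using aut_mult[OF skaut] by (simp add: mult.assoc)
qed

lemma E_add: "E c d a (x + y) = E c d a x + E c d a y"
  unfolding E_def by (simp add: Dop_add distrib_left sum.distrib)
lemma E_R: "r \<in> R \<Longrightarrow> E c d a (r * x) = r * E c d a x"
  unfolding E_def by (simp add: Dop_R sum_distrib_left mult.left_commute)
lemma E_M: "x \<in> M \<Longrightarrow> E c d a x \<in> M"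
  unfolding E_def by (intro Msum Mmult Dop_M)
lemma E_zero: "E c d a 0 = 0" unfolding E_def by (simp add: Dop_zero)
lemma E_0: "c 0 = 1 \<Longrightarrow> E c 0 a \<gamma> = \<gamma>" unfolding E_def by (simp add: Dop_0)

definition gq :: "(nat \<Rightarrow> 's) \<Rightarrow> nat \<Rightarrow> 's \<Rightarrow> nat \<Rightarrow> 's" where
  "gq c d b j = (\<Sum>k\<in>{Suc j..d}. c k * (\<Prod>t\<in>{Suc j..<k}. (\<sigma> ^^ t) b))"

lemma gq_d: "gq c d b d = 0" unfolding gq_def by simp
lemma gq_rec: assumes "j < d"
  shows "gq c d b j = c (Suc j) + (\<sigma> ^^ Suc j) b * gq c d b (Suc j)"
proof -
  have s: "{Suc j..d} = insert (Suc j) {Suc (Suc j)..d}" using assms by auto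
  have "gq c d b j = c (Suc j) + (\<Sum>k\<in>{Suc (Suc j)..d}. c k * (\<Prod>t\<in>{Suc j..<k}. (\<sigma> ^^ t) b))"
    unfolding gq_def s by simp
  also have "(\<Sum>k\<in>{Suc (Suc j)..d}. c k * (\<Prod>t\<in>{Suc j..<k}. (\<sigma> ^^ t) b)) =
      (\<Sum>k\<in>{Suc (Suc j)..d}. (\<sigma> ^^ Suc j) b * (c k * (\<Prod>t\<in>{Suc (Suc j)..<k}. (\<sigma> ^^ t) b)))"
  proof (rule sum.cong)
    fix k assume "k \<in> {Suc (Suc j)..d}"
    then have "{Suc j..<k} = insert (Suc j) {Suc (Suc j)..<k}" by auto
    then show "c k * (\<Prod>t\<in>{Suc j..<k}. (\<sigma> ^^ t) b) = (\<sigma> ^^ Suc j) b * (c k * (\<Prod>t\<in>{Suc (Suc j)..<k}. (\<sigma> ^^ t) b))"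
      by (simp add: mult.left_commute)
  qed simp
  also have "\<dots> = (\<sigma> ^^ Suc j) b * gq c d b (Suc j)" unfolding gq_def by (simp add: sum_distrib_left)
  finally show ?thesis .
qed

lemma E_div:
  "E c (Suc d) a \<gamma> = E (gq c (Suc d) b) d a (\<sigma> \<gamma> * a - b * \<gamma>) + (c 0 + gq c (Suc d) b 0 * b) * \<gamma>"
proof -
  define g where "g = gq c (Suc d) b"
  define D where "D k = Dop \<sigma> a k \<gamma>" for k
  define sb where "sb k = (\<sigma> ^^ k) b" for k
  have g_rec: "j \<le> d \<Longrightarrow> c (Suc j) = g j - sb (Suc j) * g (Suc j)" for j
    unfolding g_def sb_def using gq_rec[of j "Suc d" c b] by simp
  have gS: "g (Suc d) = 0" unfolding g_def by (rule gq_d)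
  have lhs: "E c (Suc d) a \<gamma> = c 0 * D 0 + (\<Sum>j\<le>d. c (Suc j) * D (Suc j))"
    unfolding E_def D_def by (rule sum.atMost_Suc_shift)
  have "(\<Sum>j\<le>d. c (Suc j) * D (Suc j)) = (\<Sum>j\<le>d. g j * D (Suc j)) - (\<Sum>j\<le>d. sb (Suc j) * g (Suc j) * D (Suc j))"
    by (simp add: g_rec algebra_simps sum_subtractf)
  also have "(\<Sum>j\<le>d. sb (Suc j) * g (Suc j) * D (Suc j)) = (\<Sum>k\<le>Suc d. sb k * g k * D k) - sb 0 * g 0 * D 0"
    using sum.atMost_Suc_shift[of "\<lambda>k. sb k * g k * D k" d] by (simp del: sum.atMost_Suc)
  also have "(\<Sum>k\<le>Suc d. sb k * g k * D k) = (\<Sum>k\<le>d. sb k * g k * D k)" by (simp add: gS)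
  finally have mid: "(\<Sum>j\<le>d. c (Suc j) * D (Suc j)) = (\<Sum>j\<le>d. g j * D (Suc j)) - ((\<Sum>k\<le>d. sb k * g k * D k) - sb 0 * g 0 * D 0)" .
  have rhs: "E g d a (\<sigma> \<gamma> * a - b * \<gamma>) = (\<Sum>j\<le>d. g j * D (Suc j)) - (\<Sum>k\<le>d. sb k * g k * D k)"
  proof -
    have t: "g k * Dop \<sigma> a k (\<sigma> \<gamma> * a - b * \<gamma>) = g k * D (Suc k) - sb k * g k * D k" for k
    proof -
      have "Dop \<sigma> a k (\<sigma> \<gamma> * a - b * \<gamma>) = D (Suc k) - sb k * D k"
        unfolding D_def sb_def by (simp only: Dop_diff Dop_Suc Dop_mult)
      then show ?thesis by (simp only: right_diff_distrib) (simp add: ac_simps)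
    qed
    show ?thesis unfolding E_def t by (rule sum_subtractf)
  qed
  have "sb 0 = b" "D 0 = \<gamma>" unfolding sb_def D_def by (simp_all add: Dop_0)
  then show ?thesis unfolding lhs mid rhs g_def[symmetric] by (simp add: algebra_simps)
qed

end

locale main_setup = full_setup R \<sigma> h for R :: "'s::{comm_ring_1, finite} set" and \<sigma> h +
  fixes a :: "nat \<Rightarrow> 's" and l :: nat
  assumes aunit: "\<forall>i\<in>{1..l}. a i dvd 1"
    and nonconj: "\<forall>i j \<beta> \<gamma>. 1 \<le> i \<and> i < j \<and> j \<le> l \<and> \<beta> * \<gamma> = 1 \<longrightarrow>
           (a i - \<sigma> \<beta> * a j * \<gamma>) dvd 1"
begin

abbreviation q where "q \<equiv> resfield_card R"

lemma K_other:
  assumes i: "i \<in> {1..l}" and i0: "i0 \<in> {1..l}" and ne: "i \<noteq> i0"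
    and \<beta>: "\<beta> * \<beta>' = 1" and b: "b = \<sigma> \<beta> * a i0 * \<beta>'"
    and \<gamma>M: "\<sigma> \<gamma> * a i - b * \<gamma> \<in> M"
  shows "\<gamma> \<in> M"
proof (rule ccontr)
  assume "\<gamma> \<notin> M"
  then obtain \<gamma>' where \<gamma>: "\<gamma> * \<gamma>' = 1" using local_unit by (metis dvdE)
  have s\<beta>: "\<sigma> \<beta>' * \<sigma> \<beta> = 1" using aut_unit[OF saut \<beta>] by (simp add: mult.commute)
  define \<epsilon> where "\<epsilon> = \<beta>' * \<gamma>"
  define \<epsilon>' where "\<epsilon>' = \<gamma>' * \<beta>"
  have \<epsilon>: "\<epsilon> * \<epsilon>' = 1" unfolding \<epsilon>_def \<epsilon>'_def using \<beta> \<gamma>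
    by (metis mult.assoc mult.commute mult_1_right)
  have "\<sigma> \<beta>' * (\<sigma> \<gamma> * a i - b * \<gamma>) * \<epsilon>' \<in> M" using Mmult Mmult2 \<gamma>M by blast
  moreover have "\<sigma> \<beta>' * (\<sigma> \<gamma> * a i - b * \<gamma>) * \<epsilon>' = \<sigma> \<epsilon> * a i * \<epsilon>' - a i0"
  proof -
    have e1: "\<sigma> \<beta>' * (\<sigma> \<gamma> * a i) * \<epsilon>' = \<sigma> \<epsilon> * a i * \<epsilon>'"
      unfolding \<epsilon>_def using aut_mult[OF saut, of \<beta>' \<gamma>] by (simp add: ac_simps)
    have "\<sigma> \<beta>' * (b * \<gamma>) * \<epsilon>' = (\<sigma> \<beta>' * \<sigma> \<beta>) * a i0 * (\<beta>' * \<beta>) * (\<gamma> * \<gamma>')"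
      unfolding b \<epsilon>'_def by (simp add: ac_simps)
    also have "\<dots> = a i0" using s\<beta> \<beta> \<gamma> by (simp add: mult.commute)
    finally show ?thesis using e1 by (simp add: algebra_simps)
  qed
  ultimately have X: "\<sigma> \<epsilon> * a i * \<epsilon>' - a i0 \<in> M" by simp
  show False
  proof (cases "i0 < i")
    case True
    have "(a i0 - \<sigma> \<epsilon> * a i * \<epsilon>') dvd 1" using nonconj i i0 True \<epsilon> by auto
    moreover have "a i0 - \<sigma> \<epsilon> * a i * \<epsilon>' \<in> M" using Mdiff_sym[OF X] .
    ultimately show False using unit_notin_M by blast
  next
    case False
    then have lt: "i < i0" using ne by simp
    have se: "\<sigma> \<epsilon>' * \<sigma> \<epsilon> = 1" using aut_unit[OF saut \<epsilon>] by (simp add: mult.commute)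
    have "\<sigma> \<epsilon>' * (\<sigma> \<epsilon> * a i * \<epsilon>' - a i0) * \<epsilon> \<in> M" using Mmult Mmult2 X by blast
    moreover have "\<sigma> \<epsilon>' * (\<sigma> \<epsilon> * a i * \<epsilon>' - a i0) * \<epsilon> = a i - \<sigma> \<epsilon>' * a i0 * \<epsilon>"
    proof -
      have "\<sigma> \<epsilon>' * (\<sigma> \<epsilon> * a i * \<epsilon>') * \<epsilon> = (\<sigma> \<epsilon>' * \<sigma> \<epsilon>) * a i * (\<epsilon> * \<epsilon>')" by (simp add: ac_simps)
      also have "\<dots> = a i" using se \<epsilon> by simp
      finally show ?thesis by (simp add: algebra_simps)
    qed
    ultimately have "a i - \<sigma> \<epsilon>' * a i0 * \<epsilon> \<in> M" by simp
    moreover have "\<epsilon>' * \<epsilon> = 1" using \<epsilon> by (simp add: mult.commute)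
    then have "(a i - \<sigma> \<epsilon>' * a i0 * \<epsilon>) dvd 1" using nonconj i i0 lt by auto
    ultimately show False using unit_notin_M by blast
  qed
qed

lemma K_same:
  assumes i0: "i0 \<in> {1..l}" and \<beta>: "\<beta> * \<beta>' = 1" and b: "b = \<sigma> \<beta> * a i0 * \<beta>'"
  shows "card {\<gamma>. \<sigma> \<gamma> * a i0 - b * \<gamma> \<in> M} \<le> q * card M"
proof -
  obtain a' where a': "a i0 * a' = 1" using aunit i0 by (metis dvdE)
  have s\<beta>: "\<sigma> \<beta> * \<sigma> \<beta>' = 1" using aut_unit[OF saut \<beta>] .
  define Y where "Y = {\<delta>. \<delta> ^ q - \<delta> \<in> M}"
  have "{\<gamma>. \<sigma> \<gamma> * a i0 - b * \<gamma> \<in> M} \<subseteq> (\<lambda>\<delta>. \<delta> * \<beta>) ` Y"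
  proof
    fix \<gamma> assume "\<gamma> \<in> {\<gamma>. \<sigma> \<gamma> * a i0 - b * \<gamma> \<in> M}"
    then have g: "\<sigma> \<gamma> * a i0 - b * \<gamma> \<in> M" by simp
    define \<delta> where "\<delta> = \<gamma> * \<beta>'"
    have "\<gamma> * \<beta>' * \<beta> = \<gamma> * (\<beta> * \<beta>')" by (simp add: ac_simps)
    then have g\<delta>: "\<gamma> = \<delta> * \<beta>" unfolding \<delta>_def using \<beta> by simp
    have "\<sigma> \<gamma> * a i0 - b * \<gamma> = (\<sigma> \<beta> * a i0) * (\<sigma> \<delta> - \<delta>)"
    proof -
      have "\<sigma> \<gamma> = \<sigma> \<delta> * \<sigma> \<beta>" unfolding g\<delta> by (rule aut_mult[OF saut])
      moreover have "b * \<gamma> = \<sigma> \<beta> * a i0 * \<delta>" unfolding b \<delta>_def by (simp add: ac_simps)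
      ultimately show ?thesis by (simp add: algebra_simps)
    qed
    then have "(\<sigma> \<beta> * a i0) * (\<sigma> \<delta> - \<delta>) \<in> M" using g by simp
    moreover have "(\<sigma> \<beta> * a i0) * (\<sigma> \<beta>' * a') = 1" using s\<beta> a'
      by (metis mult.assoc mult.left_commute mult_1_right)
    ultimately have "\<sigma> \<delta> - \<delta> \<in> M" by (rule unit_M_cancel[rotated])
    then have "(\<sigma> \<delta> - \<delta>) - (\<sigma> \<delta> - \<delta> ^ q) \<in> M" using sq Mdiff by blast
    then have "\<delta> \<in> Y" unfolding Y_def by simp
    then show "\<gamma> \<in> (\<lambda>\<delta>. \<delta> * \<beta>) ` Y" using g\<delta> by blast
  qed
  then have "card {\<gamma>. \<sigma> \<gamma> * a i0 - b * \<gamma> \<in> M} \<le> card ((\<lambda>\<delta>. \<delta> * \<beta>) ` Y)" by (simp add: card_mono)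
  also have "\<dots> \<le> card Y" by (rule card_image_le) simp
  also have "\<dots> \<le> q * card M" unfolding Y_def by (rule fix_count)
  finally show ?thesis .
qed

definition VV where "VV c d i = {\<gamma>. E c d (a i) \<gamma> \<in> M}"

lemma VV_M: "w \<in> VV c d i \<Longrightarrow> \<mu> \<in> M \<Longrightarrow> w + \<mu> \<in> VV c d i"
  unfolding VV_def using E_add E_M Madd by simp

lemma main: "c d = 1 \<Longrightarrow> (\<Prod>i\<in>{1..l}. card (VV c d i)) \<le> card M ^ l * q ^ d"
proof (induction d arbitrary: c)
  case 0
  have "VV c 0 i = M" for i unfolding VV_def using E_0[of c, OF 0] by simp
  then show ?case by simp
next
  case (Suc d)
  show ?case
  proof (cases "\<forall>i\<in>{1..l}. VV c (Suc d) i \<subseteq> M")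
    case True
    have "(\<Prod>i\<in>{1..l}. card (VV c (Suc d) i)) \<le> (\<Prod>i\<in>{1..l}. card M)"
    proof (rule prod_mono)
      fix i assume "i \<in> {1..l}"
      then have "VV c (Suc d) i \<subseteq> M" using True by blast
      then show "0 \<le> card (VV c (Suc d) i) \<and> card (VV c (Suc d) i) \<le> card M"
        by (simp add: card_mono)
    qed
    also have "\<dots> = card M ^ l" by simp
    also have "\<dots> \<le> card M ^ l * q ^ Suc d" using q_ge2 by simp
    finally show ?thesis .
  next
    case False
    then obtain i0 \<beta> where i0: "i0 \<in> {1..l}" and \<beta>V: "\<beta> \<in> VV c (Suc d) i0" and \<beta>M: "\<beta> \<notin> M" by blast
    obtain \<beta>' where \<beta>: "\<beta> * \<beta>' = 1" using local_unit[OF \<beta>M] by (metis dvdE)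
    define b where "b = \<sigma> \<beta> * a i0 * \<beta>'"
    define g where "g = gq c (Suc d) b"
    define r where "r = c 0 + g 0 * b"
    define L where "L i \<gamma> = \<sigma> \<gamma> * a i - b * \<gamma>" for i \<gamma>
    have ediv: "E c (Suc d) (a i) \<gamma> = E g d (a i) (L i \<gamma>) + r * \<gamma>" for i \<gamma>
      unfolding g_def r_def L_def by (rule E_div)
    have gd: "g d = 1" unfolding g_def using gq_rec[of d "Suc d" c b] gq_d Suc.prems by simp
    have "b * \<beta> = \<sigma> \<beta> * a i0 * (\<beta> * \<beta>')" unfolding b_def by (simp add: ac_simps)
    then have L0: "L i0 \<beta> = 0" unfolding L_def using \<beta> by simp
    have "r * \<beta> \<in> M" using \<beta>V ediv[of i0 \<beta>] L0 E_zero unfolding VV_def by simp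
    then have rM: "r \<in> M" using unit_M_cancel[of \<beta> \<beta>' r] \<beta> by (simp add: mult.commute)
    have VVeq: "VV c (Suc d) i = {\<gamma>. L i \<gamma> \<in> VV g d i}" for i
    proof -
      have "E c (Suc d) (a i) \<gamma> \<in> M \<longleftrightarrow> E g d (a i) (L i \<gamma>) \<in> M" for \<gamma>
      proof -
        have r\<gamma>: "r * \<gamma> \<in> M" using Mmult2[OF rM] .
        show ?thesis unfolding ediv
          using Madd[OF _ r\<gamma>] Mdiff[OF _ r\<gamma>] by fastforce
      qed
      then show ?thesis unfolding VV_def by simp
    qed
    have Ladd: "L i (x + y) = L i x + L i y" for i x y
      unfolding L_def using aut_add[OF saut] by (simp add: algebra_simps)
    have per: "card (VV c (Suc d) i) \<le> card (VV g d i) * (if i = i0 then q else 1)" if i: "i \<in> {1..l}" for i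
    proof -
      have "card (VV c (Suc d) i) * card M \<le> card (VV g d i) * card {\<gamma>. L i \<gamma> \<in> M}"
        unfolding VVeq by (rule preimage_card[OF Ladd VV_M])
      also have "card {\<gamma>. L i \<gamma> \<in> M} \<le> (if i = i0 then q else 1) * card M"
      proof (cases "i = i0")
        case True
        then show ?thesis unfolding L_def using K_same[OF i0 \<beta> b_def] by simp
      next
        case False
        have "{\<gamma>. L i \<gamma> \<in> M} \<subseteq> M" unfolding L_def using K_other[OF i i0 False \<beta> b_def] by blast
        then show ?thesis using False by (simp add: card_mono)
      qed
      finally have "card (VV c (Suc d) i) * card M \<le> card (VV g d i) * ((if i = i0 then q else 1) * card M)"
        by (simp add: mult_le_mono2)
      then show ?thesis using card_M_pos by (simp add: mult.assoc[symmetric])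
    qed
    have "(\<Prod>i\<in>{1..l}. card (VV c (Suc d) i)) \<le> (\<Prod>i\<in>{1..l}. card (VV g d i) * (if i = i0 then q else 1))"
      by (rule prod_mono) (use per in auto)
    also have "\<dots> = (\<Prod>i\<in>{1..l}. card (VV g d i)) * (\<Prod>i\<in>{1..l}. (if i = i0 then q else 1))"
      by (rule prod.distrib)
    also have "(\<Prod>i\<in>{1..l}. (if i = i0 then q else 1)) = q" using i0 by (simp add: prod.delta)
    also have "(\<Prod>i\<in>{1..l}. card (VV g d i)) * q \<le> card M ^ l * q ^ d * q"
      using Suc.IH[of g, OF gd] by simp
    also have "\<dots> = card M ^ l * q ^ Suc d" by simp
    finally show ?thesis .
  qed
qed

end



context main_setup begin

lemma final: assumes cd: "c d = 1" shows "(\<Sum>i=1..l. frk R (VV c d i)) \<le> d"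
proof -
  define n where "n i = frk R (VV c d i)" for i
  have lb: "card M * q ^ n i \<le> card (VV c d i)" for i
  proof -
    obtain A where A: "A \<subseteq> VV c d i" "R_indep R A" "card A = n i"
      using frk_attained[of "VV c d i"] unfolding n_def by blast
    have "card M * q ^ card A \<le> card (VV c d i)"
    proof (rule lower_bound[OF _ _ _ A(1) A(2)])
      show "M \<subseteq> VV c d i" unfolding VV_def using E_M by blast
      show "x + y \<in> VV c d i" if "x \<in> VV c d i" "y \<in> VV c d i" for x y
        using that unfolding VV_def by (simp add: E_add Madd)
      show "r * x \<in> VV c d i" if "r \<in> R" "x \<in> VV c d i" for r x
        using that unfolding VV_def by (simp add: E_R Mmult)
    qed
    then show ?thesis using A(3) by simp
  qed
  have "(\<Prod>i\<in>{1..l}. card M * q ^ n i) \<le> (\<Prod>i\<in>{1..l}. card (VV c d i))"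
    by (rule prod_mono) (use lb in auto)
  also have "\<dots> \<le> card M ^ l * q ^ d" by (rule main[of c d, OF cd])
  finally have le: "(\<Prod>i\<in>{1..l}. card M * q ^ n i) \<le> card M ^ l * q ^ d" .
  have "(\<Prod>i\<in>{1..l}. card M * q ^ n i) = card M ^ l * q ^ (\<Sum>i\<in>{1..l}. n i)"
    by (simp add: prod.distrib power_sum)
  then have "card M ^ l * q ^ (\<Sum>i\<in>{1..l}. n i) \<le> card M ^ l * q ^ d" using le by simp
  then have "0 < card M ^ l \<longrightarrow> q ^ (\<Sum>i\<in>{1..l}. n i) \<le> q ^ d" by (simp only: mult_le_cancel1)
  moreover have "card M ^ l > 0" using card_M_pos by simp
  ultimately have "q ^ (\<Sum>i\<in>{1..l}. n i) \<le> q ^ d" by blast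
  moreover have "1 < q" using q_ge2 by simp
  ultimately have "(\<Sum>i\<in>{1..l}. n i) \<le> d" using power_le_imp_le_exp by blast
  then show ?thesis unfolding n_def .
qed

end

theorem theorem1:
  fixes R :: "'s::{comm_ring_1, finite} set"
    and h :: "'s poly"
    and \<sigma> :: "'s \<Rightarrow> 's"
    and a :: "nat \<Rightarrow> 's"
    and l :: nat
    and F :: "'s poly"
  assumes "finite_chain_ring R"
    and "poly_over R h" and "lead_coeff h = 1" and "irred_mod_max R h"
    and "is_quotient_by R h"
    and "galois_generator R \<sigma>"
    and "\<forall>i\<in>{1..l}. a i dvd 1"
    and "\<forall>i j \<beta> \<gamma>. 1 \<le> i \<and> i < j \<and> j \<le> l \<and> \<beta> * \<gamma> = 1 \<longrightarrow>
           (a i - \<sigma> \<beta> * a j * \<gamma>) dvd 1"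
    and "lead_coeff F = 1"
  shows "(\<Sum>i=1..l. frk R {\<beta>. skew_eval \<sigma> F (a i) \<beta> \<in> ext_ideal R}) \<le> degree F"
proof -
  interpret main_setup R \<sigma> h a l
    by (unfold_locales) (use assms in auto)
  have "{\<beta>. skew_eval \<sigma> F (a i) \<beta> \<in> ext_ideal R} = VV (coeff F) (degree F) i" for i
    unfolding VV_def E_def skew_eval_def ..
  then show ?thesis using final[of "coeff F" "degree F"] assms(9) by simp
qed



end
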